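(* Let $a>0$, $q\neq0$, $p\in(4,6)$, and let $u\in\mathcal{E}\setminus\{0\}$ be a weak solution, i.e. $I_a'(u)=0$. Then $I_a(u)\ge c_a$, where $c_a=\inf_{\gamma\in\Gamma}\max_{t\in[0,1]}I_a(\gamma(t))$ and $\Gamma=\{\gamma\in C([0,1],\mathcal{E}):\gamma(0)=0,\ I_a(\gamma(1))<0\}$.
   Context: $D^{1,2}(\mathbb{R}^3)=\{u\in L^6(\mathbb{R}^3):|\nabla u|\in L^2(\mathbb{R}^3)\}$. $\mathcal{K}_a(x)=\frac{1-e^{-|x|/a}}{|x|}$, $V(f,g)=\int\int\mathcal{K}_a(x-y)f(x)g(y)\,dx\,dy$, $\mathcal{E}=\{u\in D^{1,2}(\mathbb{R}^3):V(u^2,u^2)<\infty\}$ with norm $\|u\|_{\mathcal{E}}=(\|\nabla u\|_2^2+V(u^2,u^2)^{1/2})^{1/2}$, $I_a(u)=\frac12\|\nabla u\|_2^2+\frac{q^2}{4}V(u^2,u^2)-\frac1p\|u\|_p^p$, which is $C^1$ on $\mathcal{E}$ with $I_a'(u)[v]=\int\nabla u\cdot\nabla v+q^2\int\phi_u uv-\int|u|^{p-2}uv$, $\phi_u=\mathcal{K}_a*u^2$. *)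

theory Defs
  imports "HOL-Analysis.Analysis"
begin

type_synonym R3 = "real ^ 3"

definition pd :: "3 \<Rightarrow> (R3 \<Rightarrow> real) \<Rightarrow> R3 \<Rightarrow> real" where
  "pd i f x = frechet_derivative f (at x) (axis i 1)"

definition smooth3 :: "(R3 \<Rightarrow> real) \<Rightarrow> bool" where
  "smooth3 f \<longleftrightarrow> (\<forall>js x. (foldr pd js f) differentiable (at x))"

definition test_fun :: "(R3 \<Rightarrow> real) \<Rightarrow> bool" where
  "test_fun \<phi> \<longleftrightarrow> smooth3 \<phi> \<and> compact (closure {x. \<phi> x \<noteq> 0})"

definition weak_grad :: "(R3 \<Rightarrow> real) \<Rightarrow> (R3 \<Rightarrow> R3) \<Rightarrow> bool" where
  "weak_grad u g \<longleftrightarrow>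
     u \<in> borel_measurable lborel \<and> g \<in> borel_measurable lborel \<and>
     (\<forall>K. compact K \<longrightarrow> set_integrable lborel K u \<and> set_integrable lborel K g) \<and>
     (\<forall>\<phi> i. test_fun \<phi> \<longrightarrow>
        (\<integral>x. u x * pd i \<phi> x \<partial>lborel) = - (\<integral>x. g x $ i * \<phi> x \<partial>lborel))"

definition grad :: "(R3 \<Rightarrow> real) \<Rightarrow> R3 \<Rightarrow> R3" where
  "grad u = (SOME g. weak_grad u g)"

definition D12 :: "(R3 \<Rightarrow> real) set" where
  "D12 = {u. u \<in> borel_measurable lborel \<and> integrable lborel (\<lambda>x. \<bar>u x\<bar> ^ 6) \<and>
             (\<exists>g. weak_grad u g \<and> integrable lborel (\<lambda>x. (norm (g x))\<^sup>2))}"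

definition Ka :: "real \<Rightarrow> R3 \<Rightarrow> real" where
  "Ka a x = (1 - exp (- norm x / a)) / norm x"

text \<open>V(u^2,u^2) as an extended nonnegative real (integrand is nonnegative).\<close>
definition Vnn :: "real \<Rightarrow> (R3 \<Rightarrow> real) \<Rightarrow> ennreal" where
  "Vnn a u = (\<integral>\<^sup>+x. \<integral>\<^sup>+y. ennreal (Ka a (x - y) * (u x)\<^sup>2 * (u y)\<^sup>2) \<partial>lborel \<partial>lborel)"

definition V :: "real \<Rightarrow> (R3 \<Rightarrow> real) \<Rightarrow> real" where
  "V a u = enn2real (Vnn a u)"

definition Espace :: "real \<Rightarrow> (R3 \<Rightarrow> real) set" where
  "Espace a = {u \<in> D12. Vnn a u < \<infinity>}"

definition grad_sq :: "(R3 \<Rightarrow> real) \<Rightarrow> real" where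
  "grad_sq u = (\<integral>x. (norm (grad u x))\<^sup>2 \<partial>lborel)"

definition Enorm :: "real \<Rightarrow> (R3 \<Rightarrow> real) \<Rightarrow> real" where
  "Enorm a u = sqrt (grad_sq u + sqrt (V a u))"

definition Ia :: "real \<Rightarrow> real \<Rightarrow> real \<Rightarrow> (R3 \<Rightarrow> real) \<Rightarrow> real" where
  "Ia a q p u = 1/2 * grad_sq u + q\<^sup>2 / 4 * V a u - 1/p * (\<integral>x. \<bar>u x\<bar> powr p \<partial>lborel)"

definition phi_u :: "real \<Rightarrow> (R3 \<Rightarrow> real) \<Rightarrow> R3 \<Rightarrow> real" where
  "phi_u a u x = (\<integral>y. Ka a (x - y) * (u y)\<^sup>2 \<partial>lborel)"

definition Ia_deriv :: "real \<Rightarrow> real \<Rightarrow> real \<Rightarrow> (R3 \<Rightarrow> real) \<Rightarrow> (R3 \<Rightarrow> real) \<Rightarrow> real" where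
  "Ia_deriv a q p u v =
     (\<integral>x. grad u x \<bullet> grad v x \<partial>lborel) + q\<^sup>2 * (\<integral>x. phi_u a u x * u x * v x \<partial>lborel)
     - (\<integral>x. \<bar>u x\<bar> powr (p - 2) * u x * v x \<partial>lborel)"

definition weak_solution :: "real \<Rightarrow> real \<Rightarrow> real \<Rightarrow> (R3 \<Rightarrow> real) \<Rightarrow> bool" where
  "weak_solution a q p u \<longleftrightarrow> u \<in> Espace a \<and> (\<forall>v \<in> Espace a. Ia_deriv a q p u v = 0)"

definition Epath :: "real \<Rightarrow> (real \<Rightarrow> R3 \<Rightarrow> real) \<Rightarrow> bool" where
  "Epath a \<gamma> \<longleftrightarrow> (\<forall>t\<in>{0..1}. \<gamma> t \<in> Espace a) \<and>
     (\<forall>t\<in>{0..1}. \<forall>e>0. \<exists>d>0. \<forall>s\<in>{0..1}. \<bar>s - t\<bar> < d \<longrightarrow> Enorm a (\<lambda>x. \<gamma> s x - \<gamma> t x) < e)"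

definition Gamma :: "real \<Rightarrow> real \<Rightarrow> real \<Rightarrow> (real \<Rightarrow> R3 \<Rightarrow> real) set" where
  "Gamma a q p = {\<gamma>. Epath a \<gamma> \<and> (AE x in lborel. \<gamma> 0 x = 0) \<and> Ia a q p (\<gamma> 1) < 0}"

definition c_a :: "real \<Rightarrow> real \<Rightarrow> real \<Rightarrow> ereal" where
  "c_a a q p = (INF \<gamma>\<in>Gamma a q p. SUP t\<in>{0..1}. ereal (Ia a q p (\<gamma> t)))"

end

theory Submission
  imports Defs "HOL-Computational_Algebra.Polynomial"
begin


lemma box_zero_ae:
  fixes h :: "'a::euclidean_space \<Rightarrow> real"
  assumes hi: "integrable lborel h"
    and hb: "\<And>a b. (\<integral>x. indicator (box a b) x * h x \<partial>lborel) = 0"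
  shows "AE x in lborel. h x = 0"
proof -
  have hm[measurable]: "h \<in> borel_measurable lborel" using hi by auto
  define F1 where "F1 = (\<lambda>x. ennreal (max 0 (h x)))"
  define F2 where "F2 = (\<lambda>x. ennreal (max 0 (- h x)))"
  have i1: "integrable lborel (\<lambda>x. max 0 (h x))" using hi by auto
  have i2: "integrable lborel (\<lambda>x. max 0 (- h x))" using hi by auto
  have eqX: "emeasure (density lborel F1) X = emeasure (density lborel F2) X"
    if X: "X = box a b" for X a b
  proof -
    have Xm[measurable]: "X \<in> sets lborel" using X by simp
    have ia: "integrable lborel (\<lambda>x. indicator X x * max 0 (h x))"
      using integrable_real_mult_indicator[OF Xm i1] by (simp add: mult_ac)
    have ib: "integrable lborel (\<lambda>x. indicator X x * max 0 (- h x))"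
      using integrable_real_mult_indicator[OF Xm i2] by (simp add: mult_ac)
    have "(\<integral>x. indicator X x * max 0 (h x) \<partial>lborel) - (\<integral>x. indicator X x * max 0 (- h x) \<partial>lborel)
        = (\<integral>x. indicator X x * h x \<partial>lborel)"
      apply (subst Bochner_Integration.integral_diff[symmetric, OF ia ib])
      apply (rule Bochner_Integration.integral_cong) by (auto simp: indicator_def)
    also have "\<dots> = 0" using hb X by simp
    finally have r: "(\<integral>x. indicator X x * max 0 (h x) \<partial>lborel) = (\<integral>x. indicator X x * max 0 (- h x) \<partial>lborel)" by simp
    have "emeasure (density lborel F1) X = (\<integral>\<^sup>+x. F1 x * indicator X x \<partial>lborel)"
      using Xm by (subst emeasure_density) (auto simp: F1_def)
    also have "\<dots> = (\<integral>\<^sup>+x. ennreal (indicator X x * max 0 (h x)) \<partial>lborel)"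
      by (auto simp: F1_def indicator_def intro!: nn_integral_cong)
    also have "\<dots> = ennreal (\<integral>x. indicator X x * max 0 (h x) \<partial>lborel)"
      by (rule nn_integral_eq_integral[OF ia]) auto
    also have "\<dots> = ennreal (\<integral>x. indicator X x * max 0 (- h x) \<partial>lborel)" using r by simp
    also have "\<dots> = (\<integral>\<^sup>+x. ennreal (indicator X x * max 0 (- h x)) \<partial>lborel)"
      by (rule nn_integral_eq_integral[OF ib, symmetric]) auto
    also have "\<dots> = (\<integral>\<^sup>+x. F2 x * indicator X x \<partial>lborel)"
      by (auto simp: F2_def indicator_def intro!: nn_integral_cong)
    also have "\<dots> = emeasure (density lborel F2) X"
      using Xm by (subst emeasure_density) (auto simp: F2_def)
    finally show ?thesis .
  qed
  have "density lborel F1 = density lborel F2"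
  proof (rule measure_eqI_generator_eq)
    let ?E = "range (\<lambda>(a, b). box a b::'a set)"
    show "Int_stable ?E"
      by (auto simp: Int_stable_def box_Int_box)
    show "?E \<subseteq> Pow UNIV" "sets (density lborel F1) = sigma_sets UNIV ?E" "sets (density lborel F2) = sigma_sets UNIV ?E"
      by (simp_all add: borel_eq_box)
    let ?A = "\<lambda>n::nat. box (- (real n *\<^sub>R One)) (real n *\<^sub>R One) :: 'a set"
    show "range ?A \<subseteq> ?E" "(\<Union>i. ?A i) = UNIV"
      unfolding UN_box_eq_UNIV by auto
    show "emeasure (density lborel F1) (?A i) \<noteq> \<infinity>" for i
    proof -
      have "emeasure (density lborel F1) (?A i) = (\<integral>\<^sup>+x. F1 x * indicator (?A i) x \<partial>lborel)"
        by (subst emeasure_density) (auto simp: F1_def)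
      also have "\<dots> \<le> (\<integral>\<^sup>+x. F1 x \<partial>lborel)"
        by (intro nn_integral_mono) (auto simp: indicator_def)
      also have "\<dots> = ennreal (\<integral>x. max 0 (h x) \<partial>lborel)"
        unfolding F1_def by (rule nn_integral_eq_integral[OF i1]) auto
      finally show ?thesis using neq_top_trans[OF ennreal_neq_top] infinity_ennreal_def by metis
    qed
    show "X \<in> ?E \<Longrightarrow> emeasure (density lborel F1) X = emeasure (density lborel F2) X" for X
      using eqX by auto
  qed
  then have "AE x in lborel. F1 x = F2 x"
    by (intro sigma_finite_measure.density_unique[OF sigma_finite_lborel]) (auto simp: F1_def F2_def)
  then show ?thesis
    by eventually_elim (auto simp: F1_def F2_def max_def split: if_splits)
qed



definition Zc :: "real poly \<Rightarrow> real \<Rightarrow> real" where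
  "Zc P t = (if t > 0 then poly P (1/t) * exp (- (1/t)) else 0)"

definition Dq :: "real poly \<Rightarrow> real poly" where
  "Dq P = [:0, 0, 1:] * (P - pderiv P)"

lemma poly_exp_lim_top: "((\<lambda>s. poly R s * exp (- s)) \<longlongrightarrow> (0::real)) at_top"
proof -
  have "((\<lambda>s. \<Sum>i\<le>degree R. coeff R i * (s ^ i / exp s)) \<longlongrightarrow> (\<Sum>i\<le>degree R. coeff R i * 0)) at_top"
    by (intro tendsto_sum tendsto_mult tendsto_const tendsto_power_div_exp_0)
  then show ?thesis
    by (simp add: poly_altdef sum_divide_distrib exp_minus field_simps)
qed

lemma poly_exp_lim0: "((\<lambda>t. poly R (1/t) * exp (- (1/t))) \<longlongrightarrow> (0::real)) (at_right 0)"
proof -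
  have "((\<lambda>t. poly R (inverse t) * exp (- (inverse t))) \<longlongrightarrow> (0::real)) (at_right 0)"
    by (rule filterlim_compose[OF poly_exp_lim_top filterlim_inverse_at_top_right])
  then show ?thesis by (simp add: inverse_eq_divide)
qed

lemma Zc_deriv: "(Zc P has_real_derivative Zc (Dq P) t) (at t)"
proof -
  consider "t > 0" | "t < 0" | "t = 0" by linarith
  then show ?thesis
  proof cases
    case 1
    have d1: "((\<lambda>t. 1/t) has_real_derivative (- (1/t^2))) (at t)"
      using 1 by (auto intro!: derivative_eq_intros simp: power2_eq_square)
    have d2: "((\<lambda>t. poly P (1/t)) has_real_derivative poly (pderiv P) (1/t) * (- (1/t^2))) (at t)"
      by (rule DERIV_chain2[OF poly_DERIV d1])
    have d3: "((\<lambda>t. exp (- (1/t))) has_real_derivative exp (- (1/t)) * (1/t^2)) (at t)"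
      using DERIV_chain2[OF DERIV_exp DERIV_minus[OF d1]] by simp
    have d4: "((\<lambda>t. poly P (1/t) * exp (- (1/t))) has_real_derivative
        poly (pderiv P) (1/t) * (- (1/t^2)) * exp (- (1/t)) + exp (- (1/t)) * (1/t^2) * poly P (1/t)) (at t)"
      by (rule DERIV_mult[OF d2 d3])
    have e: "poly (pderiv P) (1/t) * (- (1/t^2)) * exp (- (1/t)) + exp (- (1/t)) * (1/t^2) * poly P (1/t)
        = Zc (Dq P) t"
      using 1 by (simp add: Zc_def Dq_def algebra_simps power2_eq_square)
    show ?thesis
      apply (rule has_field_derivative_transform_within_open[of _ _ _ "{0<..}"])
      using d4 e 1 by (auto simp: Zc_def)
  next
    case 2
    have "((\<lambda>_. 0) has_real_derivative 0) (at t)" by simp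
    then have "(Zc P has_real_derivative 0) (at t)"
      apply (rule has_field_derivative_transform_within_open[of _ _ _ "{..<0}"])
      using 2 by (auto simp: Zc_def)
    then show ?thesis using 2 by (simp add: Zc_def)
  next
    case 3
    have L: "((\<lambda>y. (Zc P y - Zc P 0) / (y - 0)) \<longlongrightarrow> 0) (at_left 0)"
    proof -
      have "\<forall>\<^sub>F y in at_left 0. 0 = (Zc P y - Zc P 0) / (y - 0)"
        unfolding eventually_at_left_field by (auto simp: Zc_def intro!: exI[of _ "-1"])
      then show ?thesis by (rule Lim_transform_eventually[OF tendsto_const])
    qed
    have R: "((\<lambda>y. (Zc P y - Zc P 0) / (y - 0)) \<longlongrightarrow> 0) (at_right 0)"
    proof -
      have "\<forall>\<^sub>F y in at_right 0. poly (pCons 0 P) (1/y) * exp (- (1/y)) = (Zc P y - Zc P 0) / (y - 0)"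
        unfolding eventually_at_right_field by (auto simp: Zc_def intro!: exI[of _ "1"])
      then show ?thesis by (rule Lim_transform_eventually[OF poly_exp_lim0])
    qed
    have "(Zc P has_real_derivative 0) (at 0)"
      unfolding has_field_derivative_iff using L R by (simp add: filterlim_at_split)
    then show ?thesis using 3 by (simp add: Zc_def)
  qed
qed

lemma deriv_Zc: "deriv (Zc P) = Zc (Dq P)"
  using Zc_deriv DERIV_imp_deriv by blast

lemma Zc_differentiable: "Zc P differentiable (at t)"
  using Zc_deriv real_differentiable_def by blast

definition smooth1 :: "(real \<Rightarrow> real) \<Rightarrow> bool" where
  "smooth1 f \<longleftrightarrow> (\<forall>k x. (deriv ^^ k) f differentiable (at x))"

lemma funpow_deriv_Zc: "(deriv ^^ k) (Zc P) = Zc ((Dq ^^ k) P)"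
  by (induction k) (auto simp: deriv_Zc)

lemma smooth1_Zc: "smooth1 (Zc P)"
  unfolding smooth1_def funpow_deriv_Zc by (simp add: Zc_differentiable)



lemma deriv_of_diff: "f differentiable (at x) \<Longrightarrow> (f has_real_derivative deriv f x) (at x)"
  using DERIV_deriv_iff_real_differentiable by blast

lemma funpow_deriv_add:
  fixes u v :: "real \<Rightarrow> real"
  assumes "\<forall>j<k. \<forall>x. (deriv ^^ j) u differentiable (at x)"
      and "\<forall>j<k. \<forall>x. (deriv ^^ j) v differentiable (at x)"
  shows "(deriv ^^ k) (\<lambda>t. u t + v t) = (\<lambda>t. (deriv ^^ k) u t + (deriv ^^ k) v t)"
  using assms
proof (induction k)
  case 0 then show ?case by simp
next
  case (Suc k)
  have IH: "(deriv ^^ k) (\<lambda>t. u t + v t) = (\<lambda>t. (deriv ^^ k) u t + (deriv ^^ k) v t)"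
    using Suc by auto
  have du: "\<And>x. (deriv ^^ k) u differentiable (at x)" and dv: "\<And>x. (deriv ^^ k) v differentiable (at x)"
    using Suc.prems by auto
  show ?case
  proof
    fix t
    have "((\<lambda>t. (deriv ^^ k) u t + (deriv ^^ k) v t) has_real_derivative
       deriv ((deriv ^^ k) u) t + deriv ((deriv ^^ k) v) t) (at t)"
      by (intro DERIV_add deriv_of_diff du dv)
    then show "(deriv ^^ Suc k) (\<lambda>t. u t + v t) t = (deriv ^^ Suc k) u t + (deriv ^^ Suc k) v t"
      using IH by (simp add: DERIV_imp_deriv)
  qed
qed

lemma smooth1_deriv: "smooth1 f \<Longrightarrow> smooth1 (deriv f)"
  unfolding smooth1_def by (metis comp_apply funpow_Suc_right)

lemma smooth1_diff: "smooth1 f \<Longrightarrow> f differentiable (at x)"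
  unfolding smooth1_def by (metis funpow_0)

lemma deriv_mult_fun:
  assumes "smooth1 f" "smooth1 h"
  shows "deriv (\<lambda>t. f t * h t) = (\<lambda>t. deriv f t * h t + f t * deriv h t)"
proof
  fix t
  have "((\<lambda>t. f t * h t) has_real_derivative deriv f t * h t + deriv h t * f t) (at t)"
    by (intro DERIV_mult deriv_of_diff smooth1_diff assms)
  then show "deriv (\<lambda>t. f t * h t) t = deriv f t * h t + f t * deriv h t"
    by (simp add: DERIV_imp_deriv mult.commute)
qed

lemma smooth1_mult_aux:
  "\<forall>f h. smooth1 f \<longrightarrow> smooth1 h \<longrightarrow> (\<forall>x. (deriv ^^ k) (\<lambda>t. f t * h t) differentiable (at x))"
proof (induction k rule: less_induct)
  case (less k)
  show ?case
  proof (cases k)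
    case 0
    then show ?thesis by (simp add: differentiable_mult smooth1_diff)
  next
    case (Suc m)
    show ?thesis
    proof (intro allI impI)
      fix f h x assume f: "smooth1 f" and h: "smooth1 h"
      have f': "smooth1 (deriv f)" and h': "smooth1 (deriv h)" using f h smooth1_deriv by auto
      have "(deriv ^^ k) (\<lambda>t. f t * h t) = (deriv ^^ m) (deriv (\<lambda>t. f t * h t))"
        unfolding Suc funpow_Suc_right o_apply by (rule refl)
      also have "\<dots> = (deriv ^^ m) (\<lambda>t. deriv f t * h t + f t * deriv h t)"
        using deriv_mult_fun[OF f h] by simp
      also have "\<dots> = (\<lambda>t. (deriv ^^ m) (\<lambda>t. deriv f t * h t) t + (deriv ^^ m) (\<lambda>t. f t * deriv h t) t)"
        apply (rule funpow_deriv_add)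
        using less.IH Suc f h f' h' by auto
      finally show "(deriv ^^ k) (\<lambda>t. f t * h t) differentiable (at x)"
        using less.IH Suc f h f' h' by (auto intro!: differentiable_add)
    qed
  qed
qed

lemma smooth1_mult: "smooth1 f \<Longrightarrow> smooth1 h \<Longrightarrow> smooth1 (\<lambda>t. f t * h t)"
  using smooth1_mult_aux unfolding smooth1_def by blast

lemma funpow_deriv_affine:
  assumes "smooth1 f"
  shows "(deriv ^^ k) (\<lambda>t. f (c * t + d)) = (\<lambda>t. c ^ k * (deriv ^^ k) f (c * t + d))"
proof (induction k)
  case 0 then show ?case by simp
next
  case (Suc k)
  show ?case
  proof
    fix t
    have dF: "(deriv ^^ k) f differentiable (at (c * t + d))" using assms unfolding smooth1_def by blast
    have dg: "((\<lambda>t. c * t + d) has_real_derivative c) (at t)"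
      by (auto intro!: derivative_eq_intros)
    have "((\<lambda>t. c ^ k * (deriv ^^ k) f (c * t + d)) has_real_derivative
          c ^ k * (deriv ((deriv ^^ k) f) (c * t + d) * c)) (at t)"
      by (intro DERIV_cmult DERIV_chain2[OF deriv_of_diff[OF dF] dg])
    then show "(deriv ^^ Suc k) (\<lambda>t. f (c * t + d)) t = c ^ Suc k * (deriv ^^ Suc k) f (c * t + d)"
      using Suc by (simp add: DERIV_imp_deriv mult_ac)
  qed
qed

lemma smooth1_affine:
  assumes "smooth1 f" shows "smooth1 (\<lambda>t. f (c * t + d))"
  unfolding smooth1_def
proof (intro allI)
  fix k x
  have dF: "(deriv ^^ k) f differentiable (at (c * x + d))" using assms unfolding smooth1_def by blast
  have dg: "((\<lambda>t. c * t + d) has_real_derivative c) (at x)"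
    by (auto intro!: derivative_eq_intros)
  have "((\<lambda>t. c ^ k * (deriv ^^ k) f (c * t + d)) has_real_derivative
          c ^ k * (deriv ((deriv ^^ k) f) (c * x + d) * c)) (at x)"
    by (intro DERIV_cmult DERIV_chain2[OF deriv_of_diff[OF dF] dg])
  then show "(deriv ^^ k) (\<lambda>t. f (c * t + d)) differentiable (at x)"
    unfolding funpow_deriv_affine[OF assms] using real_differentiable_def by blast
qed

definition flat :: "real \<Rightarrow> real" where "flat = Zc 1"

lemma flat_eq: "flat t = (if t > 0 then exp (- (1/t)) else 0)"
  by (simp add: flat_def Zc_def)

definition bump :: "real \<Rightarrow> real \<Rightarrow> real \<Rightarrow> real \<Rightarrow> real" where
  "bump n a b t = flat (n * t + (- n * a)) * flat ((- n) * t + n * b)"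

lemma smooth1_bump: "smooth1 (bump n a b)"
proof -
  have "smooth1 (\<lambda>t. flat (n * t + (- n * a)) * flat ((- n) * t + n * b))"
    by (intro smooth1_mult smooth1_affine) (simp_all add: flat_def smooth1_Zc)
  then show ?thesis by (simp add: bump_def[abs_def])
qed



definition prod3 :: "(real \<Rightarrow> real) \<Rightarrow> (real \<Rightarrow> real) \<Rightarrow> (real \<Rightarrow> real) \<Rightarrow> R3 \<Rightarrow> real" where
  "prod3 f g h = (\<lambda>x. f (x$1) * g (x$2) * h (x$3))"

lemma coord_deriv:
  assumes "smooth1 \<psi>"
  shows "((\<lambda>x::R3. \<psi> (x$i)) has_derivative (\<lambda>h. deriv \<psi> (x$i) * h$i)) (at x)"
proof -
  have a: "((\<lambda>x::R3. x$i) has_derivative (\<lambda>h. h$i)) (at x)"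
    by (rule bounded_linear_imp_has_derivative) (rule bounded_linear_vec_nth)
  have b: "(\<psi> has_derivative (\<lambda>h. deriv \<psi> (x$i) * h)) (at (x$i))"
    using deriv_of_diff[OF smooth1_diff[OF assms]] by (simp add: has_field_derivative_def)
  show ?thesis using has_derivative_compose[OF a b] by simp
qed

lemma prod3_deriv:
  assumes "smooth1 f" "smooth1 g" "smooth1 h"
  shows "(prod3 f g h has_derivative (\<lambda>v. deriv f (x$1) * v$1 * g (x$2) * h (x$3)
     + f (x$1) * (deriv g (x$2) * v$2) * h (x$3) + f (x$1) * g (x$2) * (deriv h (x$3) * v$3))) (at x)"
proof -
  have "((\<lambda>x. f (x$1) * g (x$2) * h (x$3)) has_derivative
     (\<lambda>v. f (x$1) * g (x$2) * (deriv h (x$3) * v$3) + (f (x$1) * (deriv g (x$2) * v$2) + deriv f (x$1) * v$1 * g (x$2)) * h (x$3))) (at x)"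
    by (intro has_derivative_mult coord_deriv assms)
  then show ?thesis unfolding prod3_def
    by (rule has_derivative_eq_rhs) (auto simp: algebra_simps)
qed

lemma three_neq: "(1::3) \<noteq> 2" "(1::3) \<noteq> 3" "(2::3) \<noteq> 3" "(2::3) \<noteq> 1" "(3::3) \<noteq> 1" "(3::3) \<noteq> 2"
  by simp_all

lemma pd_prod3:
  assumes "smooth1 f" "smooth1 g" "smooth1 h"
  shows "pd 1 (prod3 f g h) = prod3 (deriv f) g h"
    "pd 2 (prod3 f g h) = prod3 f (deriv g) h"
    "pd 3 (prod3 f g h) = prod3 f g (deriv h)"
proof -
  have F: "\<And>x. frechet_derivative (prod3 f g h) (at x) = (\<lambda>v. deriv f (x$1) * v$1 * g (x$2) * h (x$3)
     + f (x$1) * (deriv g (x$2) * v$2) * h (x$3) + f (x$1) * g (x$2) * (deriv h (x$3) * v$3))"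
    by (rule sym[OF frechet_derivative_at[OF prod3_deriv[OF assms]]])
  show "pd 1 (prod3 f g h) = prod3 (deriv f) g h"
    "pd 2 (prod3 f g h) = prod3 f (deriv g) h"
    "pd 3 (prod3 f g h) = prod3 f g (deriv h)"
    unfolding pd_def F by (auto simp: fun_eq_iff axis_def prod3_def three_neq)
qed

lemma foldr_pd_prod3:
  "\<forall>f g h. smooth1 f \<longrightarrow> smooth1 g \<longrightarrow> smooth1 h \<longrightarrow>
     (\<exists>f' g' h'. smooth1 f' \<and> smooth1 g' \<and> smooth1 h' \<and> foldr pd js (prod3 f g h) = prod3 f' g' h')"
proof (induction js)
  case Nil then show ?case by auto
next
  case (Cons i js)
  show ?case
  proof (intro allI impI)
    fix f g h assume a: "smooth1 f" "smooth1 g" "smooth1 (h::real\<Rightarrow>real)"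
    obtain f' g' h' where b: "smooth1 f'" "smooth1 g'" "smooth1 h'" "foldr pd js (prod3 f g h) = prod3 f' g' h'"
      using Cons a by blast
    have "i = 1 \<or> i = 2 \<or> i = 3" by (rule exhaust_3)
    then show "\<exists>f' g' h'. smooth1 f' \<and> smooth1 g' \<and> smooth1 h' \<and> foldr pd (i # js) (prod3 f g h) = prod3 f' g' h'"
      using b pd_prod3[OF b(1-3)] smooth1_deriv by auto
  qed
qed

lemma smooth3_prod3:
  assumes "smooth1 f" "smooth1 g" "smooth1 h"
  shows "smooth3 (prod3 f g h)"
  unfolding smooth3_def
proof (intro allI)
  fix js x
  obtain f' g' h' where b: "smooth1 f'" "smooth1 g'" "smooth1 h'" "foldr pd js (prod3 f g h) = prod3 f' g' h'"
    using foldr_pd_prod3 assms by blast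
  show "foldr pd js (prod3 f g h) differentiable (at x)"
    unfolding b(4) using prod3_deriv[OF b(1-3)] differentiableI by blast
qed

lemma test_fun_prod3:
  assumes "smooth1 f" "smooth1 g" "smooth1 h"
    and "\<And>x. prod3 f g h x \<noteq> 0 \<Longrightarrow> x \<in> cbox a b"
  shows "test_fun (prod3 f g h)"
  unfolding test_fun_def
proof
  show "smooth3 (prod3 f g h)" by (rule smooth3_prod3[OF assms(1-3)])
  have "closure {x. prod3 f g h x \<noteq> 0} \<subseteq> cbox a b"
    by (rule closure_minimal) (use assms(4) in auto)
  then show "compact (closure {x. prod3 f g h x \<noteq> 0})"
    by (meson bounded_cbox bounded_subset closed_closure compact_eq_bounded_closed)
qed



lemma flat_range: "0 \<le> flat t" "flat t \<le> 1"
  by (auto simp: flat_eq)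

lemma bump_range: "0 \<le> bump N a b t" "bump N a b t \<le> 1"
  unfolding bump_def using flat_range by (auto intro: mult_le_one)

lemma bump_nz: assumes "N > 0" "bump N a b t \<noteq> 0" shows "a < t" "t < b"
proof -
  have "N * t + (- N * a) > 0" "(- N) * t + N * b > 0"
    using assms(2) by (auto simp: bump_def flat_eq split: if_splits)
  then have "N * (t - a) > 0" "N * (b - t) > 0" by (auto simp: algebra_simps)
  then show "a < t" "t < b" using assms(1) by (auto simp: zero_less_mult_iff)
qed

lemma flat_lim:
  assumes "c > 0"
  shows "(\<lambda>n. flat (real (Suc n) * c)) \<longlonglongrightarrow> 1"
proof -
  have "(\<lambda>n. inverse (real (Suc n)) * (1/c)) \<longlonglongrightarrow> 0 * (1/c)"
    by (intro tendsto_mult LIMSEQ_inverse_real_of_nat tendsto_const)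
  then have "(\<lambda>n. exp (- (inverse (real (Suc n)) * (1/c)))) \<longlonglongrightarrow> exp (- (0 * (1/c)))"
    by (intro tendsto_exp tendsto_minus)
  moreover have "flat (real (Suc n) * c) = exp (- (inverse (real (Suc n)) * (1/c)))" for n
    using assms by (auto simp: flat_eq field_simps intro!: add_pos_nonneg)
  ultimately show ?thesis by simp
qed

lemma bump_lim:
  "(\<lambda>n. bump (real (Suc n)) a b t) \<longlonglongrightarrow> (if a < t \<and> t < b then 1 else 0)"
proof (cases "a < t \<and> t < b")
  case True
  have e: "bump (real (Suc n)) a b t = flat (real (Suc n) * (t - a)) * flat (real (Suc n) * (b - t))" for n
    unfolding bump_def by (simp add: algebra_simps)
  have "(\<lambda>n. flat (real (Suc n) * (t - a)) * flat (real (Suc n) * (b - t))) \<longlonglongrightarrow> 1 * 1"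
    using True by (intro tendsto_mult flat_lim) auto
  then show ?thesis using True e by simp
next
  case False
  have "bump (real (Suc n)) a b t = 0" for n
    using bump_nz[of "real (Suc n)" a b t] False by auto
  then show ?thesis using False by auto
qed

lemma bump_cont: "continuous_on UNIV (bump N a b)"
proof -
  have "bump N a b differentiable (at x)" for x
    using smooth1_diff[OF smooth1_bump] .
  then show ?thesis
    by (simp add: continuous_at_imp_continuous_on differentiable_imp_continuous_within)
qed

definition phin :: "nat \<Rightarrow> R3 \<Rightarrow> R3 \<Rightarrow> R3 \<Rightarrow> real" where
  "phin n a b = prod3 (bump (real (Suc n)) (a$1) (b$1)) (bump (real (Suc n)) (a$2) (b$2)) (bump (real (Suc n)) (a$3) (b$3))"

lemma phin_nz: "phin n a b x \<noteq> 0 \<Longrightarrow> x \<in> box a b"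
proof -
  assume "phin n a b x \<noteq> 0"
  then have "bump (real (Suc n)) (a$1) (b$1) (x$1) \<noteq> 0" "bump (real (Suc n)) (a$2) (b$2) (x$2) \<noteq> 0"
     "bump (real (Suc n)) (a$3) (b$3) (x$3) \<noteq> 0"
    by (auto simp: phin_def prod3_def)
  then have "a$i < x$i \<and> x$i < b$i" if "i = 1 \<or> i = 2 \<or> i = 3" for i
    using that bump_nz[of "real (Suc n)"] by auto
  then show "x \<in> box a b" using exhaust_3 by (auto simp: mem_box_cart)
qed

lemma phin_test: "test_fun (phin n a b)"
proof -
  have h: "\<And>x. phin n a b x \<noteq> 0 \<Longrightarrow> x \<in> cbox a b" using phin_nz box_subset_cbox by blast
  show ?thesis unfolding phin_def
    by (rule test_fun_prod3[OF smooth1_bump smooth1_bump smooth1_bump h[unfolded phin_def]])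
qed

lemma phin_range: "0 \<le> phin n a b x" "phin n a b x \<le> 1"
  unfolding phin_def prod3_def using bump_range by (auto intro!: mult_le_one)

lemma phin_meas[measurable]: "phin n a b \<in> borel_measurable lborel"
proof -
  have "continuous_on UNIV (phin n a b)"
    unfolding phin_def prod3_def
    by (intro continuous_intros continuous_on_compose2[OF bump_cont] linear_continuous_on bounded_linear_vec_nth) auto
  then show ?thesis by (simp add: borel_measurable_continuous_onI)
qed

lemma phin_lim: "(\<lambda>n. phin n a b x) \<longlonglongrightarrow> indicator (box a b) x"
proof -
  have "(\<lambda>n. phin n a b x) \<longlonglongrightarrow> (if a$1 < x$1 \<and> x$1 < b$1 then 1 else 0) * (if a$2 < x$2 \<and> x$2 < b$2 then 1 else 0)
      * (if a$3 < x$3 \<and> x$3 < b$3 then 1 else 0)"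
    unfolding phin_def prod3_def by (intro tendsto_mult bump_lim)
  moreover have "(if a$1 < x$1 \<and> x$1 < b$1 then 1 else 0) * (if a$2 < x$2 \<and> x$2 < b$2 then 1 else 0)
      * (if a$3 < x$3 \<and> x$3 < b$3 then 1 else (0::real)) = indicator (box a b) x"
  proof -
    have "(x \<in> box a b) = ((a$1 < x$1 \<and> x$1 < b$1) \<and> (a$2 < x$2 \<and> x$2 < b$2) \<and> (a$3 < x$3 \<and> x$3 < b$3))"
      unfolding mem_box_cart forall_3 by blast
    then show ?thesis by (auto simp: indicator_def)
  qed
  ultimately show ?thesis by simp
qed



lemma comp_loc_int:
  assumes "weak_grad u g" "compact K"
  shows "integrable lborel (\<lambda>x. indicator K x * g x $ i)"
proof -
  have "set_integrable lborel K g" using assms unfolding weak_grad_def by blast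
  then have "integrable lborel (\<lambda>x. (indicator K x *\<^sub>R g x) $ i)"
    unfolding set_integrable_def by (rule integrable_bounded_linear[OF bounded_linear_vec_nth])
  then show ?thesis by simp
qed

lemma vecnth_meas[measurable]: "(\<lambda>v::R3. v $ i) \<in> borel_measurable borel"
  by (intro borel_measurable_continuous_onI linear_continuous_on bounded_linear_vec_nth)

lemma comp_meas: "weak_grad u g \<Longrightarrow> (\<lambda>x. g x $ i) \<in> borel_measurable lborel"
  unfolding weak_grad_def using measurable_compose[OF _ vecnth_meas] by blast

lemma box_int:
  assumes "weak_grad u g"
  shows "integrable lborel (\<lambda>x. indicator (box c d) x * g x $ i)"
proof -
  have "integrable lborel (\<lambda>x. (indicator (cbox c d) x * g x $ i) * indicator (box c d) x)"
    by (intro integrable_real_mult_indicator comp_loc_int[OF assms] compact_cbox) auto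
  moreover have "(\<lambda>x. (indicator (cbox c d) x * g x $ i) * indicator (box c d) x) = (\<lambda>x. indicator (box c d) x * g x $ i)"
    using box_subset_cbox[of c d] by (auto simp: indicator_def fun_eq_iff)
  ultimately show ?thesis by simp
qed

lemma box_lim:
  assumes wg: "weak_grad u g"
  shows "(\<lambda>n. \<integral>x. g x $ i * phin n a b x \<partial>lborel) \<longlonglongrightarrow> (\<integral>x. indicator (box a b) x * g x $ i \<partial>lborel)"
proof (rule integral_dominated_convergence[where w = "\<lambda>x. \<bar>indicator (cbox a b) x * g x $ i\<bar>"])
  have gm[measurable]: "(\<lambda>x. g x $ i) \<in> borel_measurable lborel" using comp_meas[OF wg] .
  show "(\<lambda>x. indicator (box a b) x * g x $ i) \<in> borel_measurable lborel" by measurable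
  show "(\<lambda>x. g x $ i * phin n a b x) \<in> borel_measurable lborel" for n by measurable
  show "integrable lborel (\<lambda>x. \<bar>indicator (cbox a b) x * g x $ i\<bar>)"
    by (intro integrable_abs comp_loc_int[OF wg] compact_cbox)
  show "AE x in lborel. (\<lambda>n. g x $ i * phin n a b x) \<longlonglongrightarrow> indicator (box a b) x * g x $ i"
    by (intro AE_I2) (simp add: tendsto_mult_left phin_lim mult.commute)
  show "AE x in lborel. norm (g x $ i * phin n a b x) \<le> \<bar>indicator (cbox a b) x * g x $ i\<bar>" for n
  proof (intro AE_I2)
    fix x
    show "norm (g x $ i * phin n a b x) \<le> \<bar>indicator (cbox a b) x * g x $ i\<bar>"
    proof (cases "phin n a b x = 0")
      case True then show ?thesis by simp
    next
      case False
      then have "x \<in> cbox a b" using phin_nz box_subset_cbox by blast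
      then show ?thesis using phin_range[of n a b x]
        by (auto simp: abs_mult intro: mult_left_le)
    qed
  qed
qed

lemma wg_test:
  assumes "weak_grad u g" "test_fun \<phi>"
  shows "(\<integral>x. u x * pd i \<phi> x \<partial>lborel) = - (\<integral>x. g x $ i * \<phi> x \<partial>lborel)"
  using assms unfolding weak_grad_def by blast

lemma box_int_eq:
  assumes "weak_grad u g1" "weak_grad u g2"
  shows "(\<integral>x. indicator (box a b) x * g1 x $ i \<partial>lborel) = (\<integral>x. indicator (box a b) x * g2 x $ i \<partial>lborel)"
proof -
  have eqn: "(\<integral>x. g1 x $ i * phin n a b x \<partial>lborel) = (\<integral>x. g2 x $ i * phin n a b x \<partial>lborel)" for n
  proof -
    have "(\<integral>x. u x * pd i (phin n a b) x \<partial>lborel) = - (\<integral>x. g1 x $ i * phin n a b x \<partial>lborel)"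
      "(\<integral>x. u x * pd i (phin n a b) x \<partial>lborel) = - (\<integral>x. g2 x $ i * phin n a b x \<partial>lborel)"
      by (rule wg_test[OF assms(1) phin_test], rule wg_test[OF assms(2) phin_test])
    then show ?thesis by simp
  qed
  have "(\<lambda>n. \<integral>x. g1 x $ i * phin n a b x \<partial>lborel) = (\<lambda>n. \<integral>x. g2 x $ i * phin n a b x \<partial>lborel)"
    using eqn by (rule ext)
  then have "(\<lambda>n. \<integral>x. g2 x $ i * phin n a b x \<partial>lborel) \<longlonglongrightarrow> (\<integral>x. indicator (box a b) x * g1 x $ i \<partial>lborel)"
    using box_lim[OF assms(1), of i a b] by simp
  then show ?thesis using box_lim[OF assms(2)] by (rule LIMSEQ_unique)
qed

lemma weak_grad_unique:
  assumes g1: "weak_grad u g1" and g2: "weak_grad u g2"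
  shows "AE x in lborel. g1 x = g2 x"
proof -
  have comp: "AE x in lborel. g1 x $ i = g2 x $ i" for i
  proof -
    define B where "B = (\<lambda>n::nat. box (- (real n *\<^sub>R One)) (real n *\<^sub>R One) :: R3 set)"
    have Hn: "AE x in lborel. indicator (B n) x * (g1 x $ i - g2 x $ i) = 0" for n
    proof (rule box_zero_ae)
      have i1: "integrable lborel (\<lambda>x. indicator (cbox (- (real n *\<^sub>R One)) (real n *\<^sub>R One)) x * g1 x $ i)"
        and i2: "integrable lborel (\<lambda>x. indicator (cbox (- (real n *\<^sub>R One)) (real n *\<^sub>R One)) x * g2 x $ i)"
        by (intro comp_loc_int[OF g1] comp_loc_int[OF g2] compact_cbox)+
      have "integrable lborel (\<lambda>x. indicator (B n) x * (indicator (cbox (- (real n *\<^sub>R One)) (real n *\<^sub>R One)) x * g1 x $ i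
          - indicator (cbox (- (real n *\<^sub>R One)) (real n *\<^sub>R One)) x * g2 x $ i))"
        unfolding B_def using integrable_real_mult_indicator[OF _ Bochner_Integration.integrable_diff[OF i1 i2]]
        by (simp add: mult.commute)
      moreover have "indicator (B n) x * (indicator (cbox (- (real n *\<^sub>R One)) (real n *\<^sub>R One)) x * g1 x $ i
          - indicator (cbox (- (real n *\<^sub>R One)) (real n *\<^sub>R One)) x * g2 x $ i) = indicator (B n) x * (g1 x $ i - g2 x $ i)" for x
        using box_subset_cbox[of "- (real n *\<^sub>R One)" "real n *\<^sub>R One"] unfolding B_def
        by (auto simp: indicator_def)
      ultimately show "integrable lborel (\<lambda>x. indicator (B n) x * (g1 x $ i - g2 x $ i))" by simp
    next
      fix a b :: R3
      have "box a b \<inter> B n = box (\<Sum>i\<in>Basis. max (a \<bullet> i) ((- (real n *\<^sub>R One)) \<bullet> i) *\<^sub>R i) (\<Sum>i\<in>Basis. min (b \<bullet> i) ((real n *\<^sub>R One) \<bullet> i) *\<^sub>R i)"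
        unfolding B_def by (rule box_Int_box)
      then obtain c d where cd: "box a b \<inter> B n = box c d" by blast
      have i1: "integrable lborel (\<lambda>x. indicator (box c d) x * g1 x $ i)"
        and i2: "integrable lborel (\<lambda>x. indicator (box c d) x * g2 x $ i)"
        by (intro box_int[OF g1] box_int[OF g2])+
      have "(\<integral>x. indicator (box a b) x * (indicator (B n) x * (g1 x $ i - g2 x $ i)) \<partial>lborel)
          = (\<integral>x. indicator (box c d) x * g1 x $ i - indicator (box c d) x * g2 x $ i \<partial>lborel)"
        by (rule Bochner_Integration.integral_cong) (auto simp: indicator_def algebra_simps simp flip: cd)
      also have "\<dots> = 0"
        using box_int_eq[OF g1 g2, of c d i] Bochner_Integration.integral_diff[OF i1 i2] by simp
      finally show "(\<integral>x. indicator (box a b) x * (indicator (B n) x * (g1 x $ i - g2 x $ i)) \<partial>lborel) = 0" .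
    qed
    have "AE x in lborel. \<forall>n. indicator (B n) x * (g1 x $ i - g2 x $ i) = 0"
      unfolding AE_all_countable using Hn by blast
    then show ?thesis
    proof eventually_elim
      fix x assume a: "\<forall>n. indicator (B n) x * (g1 x $ i - g2 x $ i) = (0::real)"
      have "x \<in> (\<Union>n. B n)" unfolding B_def UN_box_eq_UNIV by simp
      then obtain n where "x \<in> B n" by blast
      then show "g1 x $ i = g2 x $ i" using a[rule_format, of n] by simp
    qed
  qed
  have "AE x in lborel. g1 x $ 1 = g2 x $ 1 \<and> g1 x $ 2 = g2 x $ 2 \<and> g1 x $ 3 = g2 x $ 3"
    using comp[of 1] comp[of 2] comp[of 3] by eventually_elim auto
  then show ?thesis
  proof eventually_elim
    fix x assume "g1 x $ 1 = g2 x $ 1 \<and> g1 x $ 2 = g2 x $ 2 \<and> g1 x $ 3 = g2 x $ 3"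
    then show "g1 x = g2 x" unfolding vec_eq_iff forall_3 .
  qed
qed



lemma Ka_eq: "Ka a = (\<lambda>x. (1 - exp (- norm x / a)) / norm x)"
  by (simp add: Ka_def fun_eq_iff)

lemma Ka_meas[measurable]: "Ka a \<in> borel_measurable borel"
  unfolding Ka_eq by measurable

lemma Ka_nonneg: "a > 0 \<Longrightarrow> 0 \<le> Ka a x"
  unfolding Ka_def by (auto intro!: divide_nonneg_nonneg)

lemma Ka_pos: "a > 0 \<Longrightarrow> x \<noteq> 0 \<Longrightarrow> 0 < Ka a x"
  unfolding Ka_def by (auto intro!: divide_pos_pos)

lemma joint_meas:
  assumes [measurable]: "u \<in> borel_measurable lborel"
  shows "(\<lambda>(x::R3, y::R3). ennreal (Ka a (x - y) * (u x)\<^sup>2 * (u y)\<^sup>2)) \<in> borel_measurable (lborel \<Otimes>\<^sub>M lborel)"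
  by measurable

lemma inner_meas:
  assumes [measurable]: "u \<in> borel_measurable lborel"
  shows "(\<lambda>x. \<integral>\<^sup>+y. ennreal (Ka a (x - y) * (u x)\<^sup>2 * (u y)\<^sup>2) \<partial>lborel) \<in> borel_measurable lborel"
  using sigma_finite_measure.borel_measurable_nn_integral[OF sigma_finite_lborel joint_meas[OF assms]]
  by simp

lemma Vnn_scale:
  assumes a: "a > 0" and [measurable]: "u \<in> borel_measurable lborel"
  shows "Vnn a (\<lambda>x. c * u x) = ennreal (c^4) * Vnn a u"
proof -
  have "Vnn a (\<lambda>x. c * u x) = (\<integral>\<^sup>+x. ennreal (c^4) * (\<integral>\<^sup>+y. ennreal (Ka a (x - y) * (u x)\<^sup>2 * (u y)\<^sup>2) \<partial>lborel) \<partial>lborel)"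
    unfolding Vnn_def
  proof (intro nn_integral_cong)
    fix x
    have "(\<integral>\<^sup>+y. ennreal (Ka a (x - y) * (c * u x)\<^sup>2 * (c * u y)\<^sup>2) \<partial>lborel)
        = (\<integral>\<^sup>+y. ennreal (c^4) * ennreal (Ka a (x - y) * (u x)\<^sup>2 * (u y)\<^sup>2) \<partial>lborel)"
      by (intro nn_integral_cong) (auto simp: ennreal_mult'[symmetric] Ka_nonneg[OF a] power_mult_distrib algebra_simps
           simp flip: ennreal_mult)
    also have "\<dots> = ennreal (c^4) * (\<integral>\<^sup>+y. ennreal (Ka a (x - y) * (u x)\<^sup>2 * (u y)\<^sup>2) \<partial>lborel)"
      by (rule nn_integral_cmult) measurable
    finally show "(\<integral>\<^sup>+y. ennreal (Ka a (x - y) * (c * u x)\<^sup>2 * (c * u y)\<^sup>2) \<partial>lborel)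
        = ennreal (c^4) * (\<integral>\<^sup>+y. ennreal (Ka a (x - y) * (u x)\<^sup>2 * (u y)\<^sup>2) \<partial>lborel)" .
  qed
  also have "\<dots> = ennreal (c^4) * Vnn a u"
    unfolding Vnn_def by (rule nn_integral_cmult[OF inner_meas]) simp
  finally show ?thesis .
qed

lemma V_scale:
  assumes a: "a > 0" and [measurable]: "u \<in> borel_measurable lborel"
  shows "V a (\<lambda>x. c * u x) = c^4 * V a u"
  unfolding V_def Vnn_scale[OF assms] by (simp add: enn2real_mult)

lemma V_nonneg: "0 \<le> V a u"
  unfolding V_def by simp

lemma fubini_phi:
  assumes a: "a > 0" and [measurable]: "u \<in> borel_measurable lborel" and fin: "Vnn a u < \<infinity>"
  shows "(\<integral>x. phi_u a u x * u x * u x \<partial>lborel) = V a u"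
proof -
  define F where "F = (\<lambda>x. \<integral>\<^sup>+y. ennreal (Ka a (x - y) * (u x)\<^sup>2 * (u y)\<^sup>2) \<partial>lborel)"
  have Fm[measurable]: "F \<in> borel_measurable lborel" unfolding F_def by (rule inner_meas) simp
  have pt: "phi_u a u x * u x * u x = enn2real (F x)" for x
  proof -
    have "phi_u a u x = enn2real (\<integral>\<^sup>+y. ennreal (Ka a (x - y) * (u y)\<^sup>2) \<partial>lborel)"
      unfolding phi_u_def by (rule integral_eq_nn_integral) (auto simp: Ka_nonneg[OF a])
    moreover have "F x = ennreal ((u x)\<^sup>2) * (\<integral>\<^sup>+y. ennreal (Ka a (x - y) * (u y)\<^sup>2) \<partial>lborel)"
    proof -
      have "F x = (\<integral>\<^sup>+y. ennreal ((u x)\<^sup>2) * ennreal (Ka a (x - y) * (u y)\<^sup>2) \<partial>lborel)"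
        unfolding F_def by (intro nn_integral_cong) (auto simp: Ka_nonneg[OF a] mult_ac simp flip: ennreal_mult)
      also have "\<dots> = ennreal ((u x)\<^sup>2) * (\<integral>\<^sup>+y. ennreal (Ka a (x - y) * (u y)\<^sup>2) \<partial>lborel)"
        by (rule nn_integral_cmult) measurable
      finally show ?thesis .
    qed
    ultimately show ?thesis by (simp add: enn2real_mult power2_eq_square mult_ac)
  qed
  have Fne: "AE x in lborel. F x \<noteq> \<infinity>"
    by (rule nn_integral_PInf_AE[OF Fm]) (use fin in \<open>simp add: F_def Vnn_def\<close>)
  have "(\<integral>x. phi_u a u x * u x * u x \<partial>lborel) = (\<integral>x. enn2real (F x) \<partial>lborel)"
    by (simp add: pt)
  also have "\<dots> = enn2real (\<integral>\<^sup>+x. ennreal (enn2real (F x)) \<partial>lborel)"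
    by (rule integral_eq_nn_integral) auto
  also have "(\<integral>\<^sup>+x. ennreal (enn2real (F x)) \<partial>lborel) = (\<integral>\<^sup>+x. F x \<partial>lborel)"
    by (rule nn_integral_cong_AE) (use Fne in \<open>auto simp: less_top\<close>)
  finally show ?thesis by (simp add: V_def Vnn_def F_def)
qed

lemma V_pos:
  assumes a: "a > 0" and [measurable]: "u \<in> borel_measurable lborel" and fin: "Vnn a u < \<infinity>"
    and nz: "\<not> (AE x in lborel. u x = 0)"
  shows "0 < V a u"
proof -
  define F where "F = (\<lambda>x. \<integral>\<^sup>+y. ennreal (Ka a (x - y) * (u x)\<^sup>2 * (u y)\<^sup>2) \<partial>lborel)"
  have Fm[measurable]: "F \<in> borel_measurable lborel" unfolding F_def by (rule inner_meas) simp
  have "Vnn a u \<noteq> 0"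
  proof
    assume "Vnn a u = 0"
    then have "AE x in lborel. F x = 0"
      using nn_integral_0_iff_AE[OF Fm] by (simp add: Vnn_def F_def)
    moreover have "\<not> (\<forall>x. F x = 0 \<longrightarrow> u x = 0)"
    proof
      assume "\<forall>x. F x = 0 \<longrightarrow> u x = 0"
      then have "AE x in lborel. u x = 0" using \<open>AE x in lborel. F x = 0\<close> by (auto elim: AE_mp)
      then show False using nz by simp
    qed
    then obtain x0 where x0: "F x0 = 0" "u x0 \<noteq> 0" by blast
    have "AE y in lborel. ennreal (Ka a (x0 - y) * (u x0)\<^sup>2 * (u y)\<^sup>2) = 0"
      using x0(1) nn_integral_0_iff_AE[of "\<lambda>y. ennreal (Ka a (x0 - y) * (u x0)\<^sup>2 * (u y)\<^sup>2)" lborel]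
      by (simp add: F_def)
    then have "AE y in lborel. u y = 0"
      using AE_lborel_singleton[of x0]
    proof eventually_elim
      fix y assume h: "ennreal (Ka a (x0 - y) * (u x0)\<^sup>2 * (u y)\<^sup>2) = 0" and yn: "y \<noteq> x0"
      have "0 < Ka a (x0 - y)" using Ka_pos[OF a] yn by simp
      moreover have "Ka a (x0 - y) * (u x0)\<^sup>2 * (u y)\<^sup>2 \<le> 0" using h ennreal_eq_0_iff by blast
      ultimately show "u y = 0" using x0(2)
        by (metis mult_pos_pos not_less power2_eq_square zero_less_power2)
    qed
    then show False using nz by simp
  qed
  then show ?thesis using fin unfolding V_def
    by (simp add: enn2real_positive_iff less_top[symmetric] zero_less_iff_neq_zero)
qed



lemma young_pow:
  fixes r p s :: real
  assumes "0 < r" "r < p" "0 \<le> s"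
  shows "(s powr r - 1) / r \<le> (s powr p - 1) / p"
proof (cases "s = 0")
  case True then show ?thesis using assms by (simp add: divide_simps)
next
  case False
  then have sp: "s > 0" using assms by simp
  have "(s powr p) powr (r/p) * 1 powr (1 - r/p) \<le> (r/p) * s powr p + (1 - r/p) * 1"
    by (rule Youngs_inequality_0) (use assms sp in auto)
  moreover have "(s powr p) powr (r/p) = s powr r" using assms by (simp add: powr_powr)
  ultimately have "s powr r \<le> (r/p) * s powr p + (1 - r/p)" by simp
  then have "p * s powr r \<le> p * ((r/p) * s powr p + (1 - r/p))"
    by (rule mult_left_mono) (use assms in simp)
  moreover have "p * ((r/p) * s powr p + (1 - r/p)) = r * s powr p + (p - r)"
    using assms by (simp add: field_simps)
  ultimately have "p * s powr r \<le> r * s powr p + (p - r)" by simp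
  then have "p * (s powr r - 1) \<le> r * (s powr p - 1)" by (simp add: algebra_simps)
  then have "(p * (s powr r - 1)) / (r*p) \<le> (r * (s powr p - 1)) / (r*p)"
    by (rule divide_right_mono) (use assms in simp)
  moreover have "(p * (s powr r - 1)) / (r*p) = (s powr r - 1) / r" using assms by (simp add: field_simps)
  moreover have "(r * (s powr p - 1)) / (r*p) = (s powr p - 1) / p" using assms by (simp add: field_simps)
  ultimately show ?thesis by simp
qed

lemma fib_le:
  fixes A Bq C p s :: real
  assumes "0 \<le> A" "0 \<le> Bq" "C = A + Bq" "4 < p" "0 \<le> s"
  shows "1/2 * (s^2 * A) + 1/4 * (s^4 * Bq) - 1/p * (s powr p * C) \<le> 1/2 * A + 1/4 * Bq - 1/p * C"
proof -
  have y2: "(s^2 - 1) / 2 \<le> (s powr p - 1) / p"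
    using young_pow[of 2 p s] assms by simp
  have y4: "(s^4 - 1) / 4 \<le> (s powr p - 1) / p"
    using young_pow[of 4 p s] assms by simp
  have "A * ((s^2 - 1) / 2 - (s powr p - 1) / p) \<le> 0"
    using y2 assms by (simp add: mult_nonneg_nonpos)
  moreover have "Bq * ((s^4 - 1) / 4 - (s powr p - 1) / p) \<le> 0"
    using y4 assms by (simp add: mult_nonneg_nonpos)
  moreover have "(1/2 * (s^2 * A) + 1/4 * (s^4 * Bq) - 1/p * (s powr p * C)) - (1/2 * A + 1/4 * Bq - 1/p * C)
     = A * ((s^2 - 1) / 2 - (s powr p - 1) / p) + Bq * ((s^4 - 1) / 4 - (s powr p - 1) / p)"
    using assms by (simp add: field_simps)
  ultimately show ?thesis by linarith
qed

lemma fib_neg: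
  fixes A Bq C p T :: real
  assumes "0 \<le> A" "0 \<le> Bq" "C = A + Bq" "0 < C" "4 < p" "1 \<le> T" "T powr (p - 4) = p"
  shows "1/2 * (T^2 * A) + 1/4 * (T^4 * Bq) - 1/p * (T powr p * C) < 0"
proof -
  have "T powr p = T powr (p - 4) * T powr 4" by (simp flip: powr_add)
  then have Tp: "T powr p = p * T^4" using assms by simp
  have T24: "T^2 \<le> T^4" using assms by (simp add: power_increasing)
  have T4: "T^4 > 0" using assms by simp
  have "1/2 * (T^2 * A) \<le> 1/2 * (T^4 * A)" using T24 assms by (simp add: mult_right_mono)
  moreover have "1/p * (T powr p * C) = T^4 * A + T^4 * Bq" using Tp assms by (simp add: field_simps)
  moreover have "0 < T^4 * A + T^4 * Bq"
    using assms T4 by (metis add_nonneg_pos add_pos_nonneg distrib_left less_eq_real_def mult_pos_pos)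
  moreover have "0 \<le> T^4 * A" "0 \<le> T^4 * Bq" using assms T4 by simp_all
  ultimately show ?thesis by linarith
qed



lemma weak_grad_scale:
  assumes wg: "weak_grad u g"
  shows "weak_grad (\<lambda>x. c * u x) (\<lambda>x. c *\<^sub>R g x)"
proof -
  have um[measurable]: "u \<in> borel_measurable lborel" and gm[measurable]: "g \<in> borel_measurable lborel"
    using wg unfolding weak_grad_def by auto
  have loc: "set_integrable lborel K (\<lambda>x. c * u x) \<and> set_integrable lborel K (\<lambda>x. c *\<^sub>R g x)"
    if K: "compact K" for K
  proof
    have s1: "set_integrable lborel K u" and s2: "set_integrable lborel K g" using wg K unfolding weak_grad_def by auto
    have "integrable lborel (\<lambda>x. c * (indicator K x *\<^sub>R u x))"
      using s1 unfolding set_integrable_def by (rule integrable_mult_right)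
    moreover have "integrable lborel (\<lambda>x. c *\<^sub>R (indicator K x *\<^sub>R g x))"
      using s2 unfolding set_integrable_def by (rule integrable_scaleR_right)
    moreover have "(\<lambda>x. indicator K x *\<^sub>R (c * u x)) = (\<lambda>x. c * (indicator K x *\<^sub>R u x))"
      "(\<lambda>x. indicator K x *\<^sub>R (c *\<^sub>R g x)) = (\<lambda>x. c *\<^sub>R (indicator K x *\<^sub>R g x))"
      by (simp_all add: fun_eq_iff scaleR_left_commute)
    ultimately show "set_integrable lborel K (\<lambda>x. c * u x)" "set_integrable lborel K (\<lambda>x. c *\<^sub>R g x)"
      unfolding set_integrable_def by simp_all
  qed
  have tst: "(\<integral>x. c * u x * pd i \<phi> x \<partial>lborel) = - (\<integral>x. (c *\<^sub>R g x) $ i * \<phi> x \<partial>lborel)"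
    if "test_fun \<phi>" for \<phi> i
  proof -
    have e: "(\<integral>x. u x * pd i \<phi> x \<partial>lborel) = - (\<integral>x. g x $ i * \<phi> x \<partial>lborel)"
      using wg that unfolding weak_grad_def by blast
    have "(\<integral>x. c * u x * pd i \<phi> x \<partial>lborel) = c * (\<integral>x. u x * pd i \<phi> x \<partial>lborel)"
      by (simp add: mult.assoc)
    also have "\<dots> = - (c * (\<integral>x. g x $ i * \<phi> x \<partial>lborel))" using e by simp
    also have "\<dots> = - (\<integral>x. (c *\<^sub>R g x) $ i * \<phi> x \<partial>lborel)"
      by (simp add: mult.assoc)
    finally show ?thesis .
  qed
  show ?thesis unfolding weak_grad_def using loc tst by auto
qed

lemma D12_scale:
  assumes u: "u \<in> D12"
  shows "(\<lambda>x. c * u x) \<in> D12"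
proof -
  obtain g where g: "weak_grad u g" "integrable lborel (\<lambda>x. (norm (g x))\<^sup>2)"
    and um: "u \<in> borel_measurable lborel" and u6: "integrable lborel (\<lambda>x. \<bar>u x\<bar> ^ 6)"
    using u unfolding D12_def by blast
  have "integrable lborel (\<lambda>x. \<bar>c\<bar>^6 * \<bar>u x\<bar> ^ 6)" using u6 by (rule integrable_mult_right)
  then have "integrable lborel (\<lambda>x. \<bar>c * u x\<bar> ^ 6)" by (simp add: abs_mult power_mult_distrib)
  moreover have "integrable lborel (\<lambda>x. c^2 * (norm (g x))\<^sup>2)" using g(2) by (rule integrable_mult_right)
  then have "integrable lborel (\<lambda>x. (norm (c *\<^sub>R g x))\<^sup>2)" by (simp add: power_mult_distrib)
  moreover have "(\<lambda>x. c * u x) \<in> borel_measurable lborel" using um by measurable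
  ultimately show ?thesis unfolding D12_def using weak_grad_scale[OF g(1)] by blast
qed

lemma grad_in: "u \<in> D12 \<Longrightarrow> weak_grad u (grad u)"
  unfolding D12_def grad_def by (metis (mono_tags, lifting) mem_Collect_eq someI_ex)

lemma grad_sq_scale:
  assumes u: "u \<in> D12"
  shows "grad_sq (\<lambda>x. c * u x) = c^2 * grad_sq u"
proof -
  have w1: "weak_grad (\<lambda>x. c * u x) (grad (\<lambda>x. c * u x))" by (rule grad_in[OF D12_scale[OF u]])
  have w0: "weak_grad u (grad u)" by (rule grad_in[OF u])
  have ae: "AE x in lborel. grad (\<lambda>x. c * u x) x = c *\<^sub>R grad u x"
    by (rule weak_grad_unique[OF w1 weak_grad_scale[OF w0]])
  have [measurable]: "grad (\<lambda>x. c * u x) \<in> borel_measurable lborel" "grad u \<in> borel_measurable lborel"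
    using w1 w0 unfolding weak_grad_def by auto
  have "grad_sq (\<lambda>x. c * u x) = (\<integral>x. (norm (c *\<^sub>R grad u x))\<^sup>2 \<partial>lborel)"
    unfolding grad_sq_def by (rule integral_cong_AE) (use ae in auto)
  also have "\<dots> = (\<integral>x. c^2 * (norm (grad u x))\<^sup>2 \<partial>lborel)" by (simp add: power_mult_distrib)
  also have "\<dots> = c^2 * grad_sq u" by (simp add: grad_sq_def)
  finally show ?thesis .
qed

lemma grad_sq_nonneg: "0 \<le> grad_sq u"
  unfolding grad_sq_def by (intro Bochner_Integration.integral_nonneg) simp

lemma Espace_scale:
  assumes a: "a > 0" and u: "u \<in> Espace a"
  shows "(\<lambda>x. c * u x) \<in> Espace a"
proof -
  have ud: "u \<in> D12" and fin: "Vnn a u < \<infinity>" using u unfolding Espace_def by auto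
  have um: "u \<in> borel_measurable lborel" using ud unfolding D12_def by auto
  have "Vnn a (\<lambda>x. c * u x) < \<infinity>"
    unfolding Vnn_scale[OF a um] using fin by (simp add: ennreal_mult_less_top)
  then show ?thesis using D12_scale[OF ud] unfolding Espace_def by auto
qed

lemma Ia_scale:
  assumes a: "a > 0" and u: "u \<in> Espace a"
  shows "Ia a q p (\<lambda>x. s * u x) = 1/2 * (s^2 * grad_sq u) + q\<^sup>2 / 4 * (s^4 * V a u)
     - 1/p * (\<bar>s\<bar> powr p * (\<integral>x. \<bar>u x\<bar> powr p \<partial>lborel))"
proof -
  have ud: "u \<in> D12" using u unfolding Espace_def by auto
  have um: "u \<in> borel_measurable lborel" using ud unfolding D12_def by auto
  have "(\<integral>x. \<bar>s * u x\<bar> powr p \<partial>lborel) = (\<integral>x. \<bar>s\<bar> powr p * \<bar>u x\<bar> powr p \<partial>lborel)"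
    by (simp add: abs_mult powr_mult)
  also have "\<dots> = \<bar>s\<bar> powr p * (\<integral>x. \<bar>u x\<bar> powr p \<partial>lborel)" by simp
  finally show ?thesis
    unfolding Ia_def grad_sq_scale[OF ud] V_scale[OF a um] by simp
qed

lemma Ia_deriv_self:
  assumes a: "a > 0" and u: "u \<in> Espace a" and p: "p > 2"
  shows "Ia_deriv a q p u u = grad_sq u + q\<^sup>2 * V a u - (\<integral>x. \<bar>u x\<bar> powr p \<partial>lborel)"
proof -
  have ud: "u \<in> D12" and fin: "Vnn a u < \<infinity>" using u unfolding Espace_def by auto
  have um: "u \<in> borel_measurable lborel" using ud unfolding D12_def by auto
  have e1: "(\<integral>x. grad u x \<bullet> grad u x \<partial>lborel) = grad_sq u"
    unfolding grad_sq_def by (simp add: power2_norm_eq_inner)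
  have pw: "\<bar>y\<bar> powr (p - 2) * y * y = \<bar>y\<bar> powr p" for y :: real
  proof (cases "y = 0")
    case True then show ?thesis by simp
  next
    case False
    have "\<bar>y\<bar> powr p = \<bar>y\<bar> powr ((p - 2) + 2)" by simp
    also have "\<dots> = \<bar>y\<bar> powr (p - 2) * \<bar>y\<bar> powr 2" by (rule powr_add)
    also have "\<bar>y\<bar> powr 2 = y * y" using False by (simp add: power2_eq_square)
    finally show ?thesis by (simp add: mult.assoc)
  qed
  show ?thesis
    unfolding Ia_deriv_def e1 fubini_phi[OF a um fin] pw by simp
qed



lemma Enorm_scale:
  assumes a: "a > 0" and u: "u \<in> Espace a"
  shows "Enorm a (\<lambda>x. c * u x) = \<bar>c\<bar> * sqrt (grad_sq u + sqrt (V a u))"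
proof -
  have ud: "u \<in> D12" using u unfolding Espace_def by auto
  have um: "u \<in> borel_measurable lborel" using ud unfolding D12_def by auto
  have s4: "sqrt (c^4 * V a u) = c^2 * sqrt (V a u)"
  proof -
    have "sqrt (c^4) = c^2" by (metis abs_power2 power2_eq_square power_mult real_sqrt_abs numeral_Bit0 mult_2_right power_add)
    then show ?thesis by (simp add: real_sqrt_mult)
  qed
  have "Enorm a (\<lambda>x. c * u x) = sqrt (c^2 * (grad_sq u + sqrt (V a u)))"
    unfolding Enorm_def grad_sq_scale[OF ud] V_scale[OF a um] s4 by (simp add: algebra_simps)
  also have "\<dots> = \<bar>c\<bar> * sqrt (grad_sq u + sqrt (V a u))" by (simp add: real_sqrt_mult)
  finally show ?thesis .
qed

theorem proposition3p2:
  fixes a q p :: real and u :: "R3 \<Rightarrow> real"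
  assumes "a > 0" and "q \<noteq> 0" and "4 < p" and "p < 6"
    and "u \<in> Espace a" and "\<not> (AE x in lborel. u x = 0)"
    and "weak_solution a q p u"
  shows "ereal (Ia a q p u) \<ge> c_a a q p"
proof -
  have a: "a > 0" using assms(1) .
  have uE: "u \<in> Espace a" using assms(5) .
  have ud: "u \<in> D12" and fin: "Vnn a u < \<infinity>" using uE unfolding Espace_def by auto
  have um: "u \<in> borel_measurable lborel" using ud unfolding D12_def by auto
  define A where "A = grad_sq u"
  define B where "B = V a u"
  define C where "C = (\<integral>x. \<bar>u x\<bar> powr p \<partial>lborel)"
  have A0: "0 \<le> A" unfolding A_def by (rule grad_sq_nonneg)
  have Bpos: "0 < B" unfolding B_def by (rule V_pos[OF a um fin assms(6)])
  have "Ia_deriv a q p u u = 0" using assms(7) uE unfolding weak_solution_def by blast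
  then have sol: "A + q\<^sup>2 * B - C = 0"
    using Ia_deriv_self[OF a uE, of p q] assms(3) unfolding A_def B_def C_def by simp
  then have Cdef: "C = A + q\<^sup>2 * B" by simp
  have qB: "0 < q\<^sup>2 * B" using assms(2) Bpos by simp
  then have Cpos: "0 < C" using Cdef A0 by simp
  define T where "T = p powr (1 / (p - 4))"
  have T1: "1 \<le> T" unfolding T_def using assms(3) by (intro ge_one_powr_ge_zero) auto
  have Tp: "T powr (p - 4) = p" unfolding T_def using assms(3) by (simp add: powr_powr)
  define \<gamma> where "\<gamma> = (\<lambda>t x. (t * T) * u x)"
  have Iag: "Ia a q p (\<gamma> t) = 1/2 * ((t*T)^2 * A) + q\<^sup>2 / 4 * ((t*T)^4 * B) - 1/p * (\<bar>t*T\<bar> powr p * C)" for t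
    unfolding \<gamma>_def A_def B_def C_def by (rule Ia_scale[OF a uE])
  have Iau: "Ia a q p u = 1/2 * A + q\<^sup>2 / 4 * B - 1/p * C"
    unfolding Ia_def A_def B_def C_def by simp
  have le: "Ia a q p (\<gamma> t) \<le> Ia a q p u" if t: "t \<in> {0..1}" for t
  proof -
    have s0: "0 \<le> t * T" using t T1 by simp
    have "1/2 * ((t*T)^2 * A) + 1/4 * ((t*T)^4 * (q\<^sup>2 * B)) - 1/p * ((t*T) powr p * C)
        \<le> 1/2 * A + 1/4 * (q\<^sup>2 * B) - 1/p * C"
      by (rule fib_le[OF A0 _ Cdef assms(3) s0]) (use qB in simp)
    then show ?thesis unfolding Iag Iau using s0 by (simp add: algebra_simps)
  qed
  have neg: "Ia a q p (\<gamma> 1) < 0"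
  proof -
    have "1/2 * (T^2 * A) + 1/4 * (T^4 * (q\<^sup>2 * B)) - 1/p * (T powr p * C) < 0"
      by (rule fib_neg[OF A0 _ Cdef Cpos assms(3) T1 Tp]) (use qB in simp)
    then show ?thesis unfolding Iag using T1 by (simp add: algebra_simps)
  qed
  have Ep: "Epath a \<gamma>"
    unfolding Epath_def
  proof (intro conjI ballI allI impI)
    fix t assume "t \<in> {0..1::real}"
    show "\<gamma> t \<in> Espace a" unfolding \<gamma>_def by (rule Espace_scale[OF a uE])
  next
    fix t e :: real assume "t \<in> {0..1}" and e: "e > 0"
    define K where "K = sqrt (grad_sq u + sqrt (V a u))"
    have K0: "0 \<le> K" unfolding K_def using grad_sq_nonneg V_nonneg by simp
    define d where "d = e / (T * (K + 1))"
    have TK: "0 < T * (K + 1)" using T1 K0 by simp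
    have d0: "d > 0" unfolding d_def using e TK by simp
    show "\<exists>d>0. \<forall>s\<in>{0..1}. \<bar>s - t\<bar> < d \<longrightarrow> Enorm a (\<lambda>x. \<gamma> s x - \<gamma> t x) < e"
    proof (intro exI[of _ d] conjI ballI impI d0)
      fix s assume "s \<in> {0..1::real}" and st: "\<bar>s - t\<bar> < d"
      have "(\<lambda>x. \<gamma> s x - \<gamma> t x) = (\<lambda>x. ((s - t) * T) * u x)"
        unfolding \<gamma>_def by (simp add: fun_eq_iff algebra_simps)
      then have "Enorm a (\<lambda>x. \<gamma> s x - \<gamma> t x) = \<bar>s - t\<bar> * T * K"
        unfolding K_def using Enorm_scale[OF a uE] T1 by (simp add: abs_mult)
      also have "\<dots> \<le> \<bar>s - t\<bar> * (T * (K + 1))"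
        using T1 K0 by (simp add: mult_left_mono algebra_simps)
      also have "\<dots> < d * (T * (K + 1))"
        using st TK by (simp add: mult_strict_right_mono)
      also have "\<dots> = e"
      proof -
        have "T \<noteq> 0" "K + 1 \<noteq> 0" using T1 K0 by auto
        then show ?thesis unfolding d_def by simp
      qed
      finally show "Enorm a (\<lambda>x. \<gamma> s x - \<gamma> t x) < e" .
    qed
  qed
  have g0: "AE x in lborel. \<gamma> 0 x = 0" unfolding \<gamma>_def by simp
  have mem: "\<gamma> \<in> Gamma a q p" unfolding Gamma_def using Ep g0 neg by simp
  have "c_a a q p \<le> (SUP t\<in>{0..1}. ereal (Ia a q p (\<gamma> t)))"
    unfolding c_a_def by (rule INF_lower[OF mem])
  also have "\<dots> \<le> ereal (Ia a q p u)"
    by (rule SUP_least) (use le in simp)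
  finally show ?thesis .
qed


end
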